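(* Let $X$ be a proper, path connected metric space, let $S$ be a discrete subset of $X$, and let $x_0\in S$. Then $$\bigcup_{1\le i\le \#(S)} B_i(x_0)=X \qquad\text{and}\qquad b_i(x_0)\cap b_j(x_0)=\emptyset\ \text{ whenever } i\ne j.$$
   Context: $(X,d)$ is a metric space. It is proper if for every $x\in X$ the function $d(x,\cdot)$ is a proper map (in particular every closed ball is compact). A subset $S\subseteq X$ is discrete if every compact subset of $X$ contains only finitely many points of $S$. For $x\in X$ and $r>0$ write $N_r(x)=\{y\in X: d(x,y)<r\}$ and $C_r(x)=\{y\in X: d(x,y)=r\}$; $\#(\cdot)$ denotes cardinality. For $x_0\in S$, a positive integer $n\le\#(S)$, and $x\in X$ with $r=d(x,x_0)$, define: $x\in b_n(x_0)$ iff $\#(N_r(x)\cap S)=n-1$ and $C_r(x)\cap S=\{x_0\}$; and $x\in B_n(x_0)$ iff $\#(N_r(x)\cap S)=m$ and $\#(C_r(x)\cap S)=\ell$ for some integers $m\ge 0$, $\ell\ge 1$ with $m+1\le n\le m+\ell$. *)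

theory Defs
  imports "HOL-Analysis.Analysis" "HOL-Library.Extended_Nat"
begin

text \<open>The metric space X is the whole carrier of a type of class metric_space.\<close>

definition proper_metric :: "'a::metric_space itself \<Rightarrow> bool" where
  "proper_metric _ \<longleftrightarrow>
     (\<forall>(x::'a) K. compact K \<longrightarrow> compact {y. dist x y \<in> K})"

definition discrete_subset :: "'a::metric_space set \<Rightarrow> bool" where
  "discrete_subset S \<longleftrightarrow> (\<forall>K. compact K \<longrightarrow> finite (K \<inter> S))"

definition ecard :: "'a set \<Rightarrow> enat" where
  "ecard A = (if finite A then enat (card A) else \<infinity>)"

text \<open>b_n(x0): N_r(x) = ball x r, C_r(x) = sphere x r, r = d(x,x0).\<close>
definition small_b :: "'a::metric_space set \<Rightarrow> nat \<Rightarrow> 'a \<Rightarrow> 'a set" where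
  "small_b S n x0 = {x. finite (ball x (dist x x0) \<inter> S)
                       \<and> card (ball x (dist x x0) \<inter> S) = n - 1
                       \<and> sphere x (dist x x0) \<inter> S = {x0}}"

definition big_B :: "'a::metric_space set \<Rightarrow> nat \<Rightarrow> 'a \<Rightarrow> 'a set" where
  "big_B S n x0 = {x. \<exists>m l::nat. l \<ge> 1
                       \<and> finite (ball x (dist x x0) \<inter> S)
                       \<and> card (ball x (dist x x0) \<inter> S) = m
                       \<and> finite (sphere x (dist x x0) \<inter> S)
                       \<and> card (sphere x (dist x x0) \<inter> S) = l
                       \<and> m + 1 \<le> n \<and> n \<le> m + l}"

end

theory Submission
  imports Defs
begin

theorem mainTheorem2:
  fixes S :: "'a::metric_space set" and x0 :: 'a
  assumes "proper_metric TYPE('a)"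
    and "path_connected (UNIV :: 'a set)"
    and "discrete_subset S"
    and "x0 \<in> S"
  shows "(\<Union>i\<in>{i::nat. 1 \<le> i \<and> enat i \<le> ecard S}. big_B S i x0) = UNIV
     \<and> (\<forall>i j::nat. 1 \<le> i \<and> enat i \<le> ecard S \<and> 1 \<le> j \<and> enat j \<le> ecard S \<and> i \<noteq> j
           \<longrightarrow> small_b S i x0 \<inter> small_b S j x0 = {})"
proof
  show "(\<Union>i\<in>{i::nat. 1 \<le> i \<and> enat i \<le> ecard S}. big_B S i x0) = UNIV"
  proof (rule set_eqI, rule iffI)
    fix x :: 'a
    define r where "r = dist x x0"
    have "compact {y. dist x y \<in> {0..r}}"
      using assms(1) unfolding proper_metric_def by blast
    moreover have "{y. dist x y \<in> {0..r}} = cball x r" by auto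
    ultimately have cc: "compact (cball x r)" by simp
    hence fin: "finite (cball x r \<inter> S)" using assms(3) unfolding discrete_subset_def by blast
    have fb: "finite (ball x r \<inter> S)" by (rule finite_subset[OF _ fin]) auto
    have fs: "finite (sphere x r \<inter> S)" by (rule finite_subset[OF _ fin]) auto
    have x0s: "x0 \<in> sphere x r \<inter> S" using assms(4) by (simp add: r_def)
    define m where "m = card (ball x r \<inter> S)"
    define l where "l = card (sphere x r \<inter> S)"
    have l1: "l \<ge> 1" unfolding l_def using fs x0s
      by (metis One_nat_def Suc_leI card_gt_0_iff empty_iff)
    have un: "card ((ball x r \<inter> S) \<union> (sphere x r \<inter> S)) = m + l"
      unfolding m_def l_def by (rule card_Un_disjoint[OF fb fs]) auto
    have "enat (m + 1) \<le> ecard S"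
    proof (cases "finite S")
      case True
      have "card ((ball x r \<inter> S) \<union> (sphere x r \<inter> S)) \<le> card S"
        by (rule card_mono[OF True]) auto
      thus ?thesis using True un l1 by (simp add: ecard_def)
    next
      case False
      thus ?thesis by (simp add: ecard_def)
    qed
    moreover have "x \<in> big_B S (m+1) x0"
      unfolding big_B_def using fb fs l1
      by (auto simp: r_def[symmetric] m_def[symmetric] l_def[symmetric] intro!: exI[of _ m] exI[of _ l])
    ultimately show "x \<in> (\<Union>i\<in>{i::nat. 1 \<le> i \<and> enat i \<le> ecard S}. big_B S i x0)" by auto
  qed simp
next
  show "\<forall>i j::nat. 1 \<le> i \<and> enat i \<le> ecard S \<and> 1 \<le> j \<and> enat j \<le> ecard S \<and> i \<noteq> j
           \<longrightarrow> small_b S i x0 \<inter> small_b S j x0 = {}"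
    unfolding small_b_def by auto
qed

end
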